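(* Let $H\le G_{d,k}$. Every $(d-1)$-multicell of $\widetilde{\mathfrak X}_{d,k}(H)$ is contained in exactly $k$ $d$-multicells if and only if $\langle\alpha_i\rangle\cap gHg^{-1}=\{e\}$ for all $i\in[\![d]\!]$ and $g\in G_{d,k}$. In particular, if $H\trianglelefteq G_{d,k}$, this holds if and only if for every $i\in[\![d]\!]$ the image of $\alpha_i$ in $G_{d,k}/H$ has order exactly $k$.
   Context: Fix $d,k\ge1$, $[\![d]\!]=\{0,\dots,d\}$. $G_{d,k}=\langle\alpha_0,\dots,\alpha_d\mid\alpha_i^k=e\rangle$; for $J\subseteq[\![d]\!]$, $K_J=\langle\alpha_j:j\in J\rangle$, $\widehat J=[\![d]\!]\setminus J$. For $H\le G_{d,k}$, $[K_{\widehat J}g]_H=\{K_{\widehat J}gh:h\in H\}$. The multicomplex $\widetilde{\mathfrak X}_{d,k}(H)$ has as multicells of dimension $|J|-1$ the classes $[K_{\widehat J}g]_H$, with containment $[K_{\widehat I}g]_H\preceq[K_{\widehat J}g]_H$ for $I\subseteq J$. Its $d$-multicells are the $[g]_H=\{gh:h\in H\}$ and its $(d-1)$-multicells are the $[K_{\{i\}}g]_H$; the $d$-multicells containing $[K_{\{i\}}g]_H$ are the classes $[g']_H$ with $[K_{\{i\}}g']_H=[K_{\{i\}}g]_H$. *)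

theory Defs
  imports "HOL-Algebra.Algebra"
begin

section \<open>The free product G_{d,k} of d+1 cyclic groups of order k (reduced-word model)\<close>

text \<open>A word is a list of letters (i, a) standing for alpha_i^a.  A word is reduced if every
  letter has index i <= d, exponent 0 < a < k, and adjacent letters have distinct indices.\<close>

definition reduced_word :: "nat \<Rightarrow> nat \<Rightarrow> (nat \<times> nat) list \<Rightarrow> bool" where
  "reduced_word d k w \<longleftrightarrow>
     (\<forall>(i, a) \<in> set w. i \<le> d \<and> 0 < a \<and> a < k) \<and>
     (\<forall>n. Suc n < length w \<longrightarrow> fst (w ! n) \<noteq> fst (w ! Suc n))"

definition ins_letter :: "nat \<Rightarrow> nat \<Rightarrow> nat \<Rightarrow> (nat \<times> nat) list \<Rightarrow> (nat \<times> nat) list" where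
  "ins_letter k i a w =
     (if a mod k = 0 then w else
      (case w of
         [] \<Rightarrow> [(i, a mod k)]
       | (j, b) # w' \<Rightarrow>
           (if i = j then (if (a + b) mod k = 0 then w' else (i, (a + b) mod k) # w')
            else (i, a mod k) # w)))"

definition word_mult :: "nat \<Rightarrow> (nat \<times> nat) list \<Rightarrow> (nat \<times> nat) list \<Rightarrow> (nat \<times> nat) list" where
  "word_mult k u v = foldr (\<lambda>(i, a) w. ins_letter k i a w) u v"

definition Gdk :: "nat \<Rightarrow> nat \<Rightarrow> (nat \<times> nat) list monoid" where
  "Gdk d k = \<lparr> carrier = {w. reduced_word d k w}, monoid.mult = word_mult k, one = [] \<rparr>"

definition alpha :: "nat \<Rightarrow> nat \<Rightarrow> (nat \<times> nat) list" where
  "alpha k i = ins_letter k i 1 []"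

definition Ksub :: "nat \<Rightarrow> nat \<Rightarrow> nat set \<Rightarrow> (nat \<times> nat) list set" where
  "Ksub d k J = generate (Gdk d k) (alpha k ` J)"

definition cell_class :: "nat \<Rightarrow> nat \<Rightarrow> (nat \<times> nat) list set \<Rightarrow> nat set \<Rightarrow> (nat \<times> nat) list
    \<Rightarrow> (nat \<times> nat) list set set" where
  "cell_class d k H J g =
     {(Ksub d k ({0..d} - J) #>\<^bsub>Gdk d k\<^esub> g) #>\<^bsub>Gdk d k\<^esub> h | h. h \<in> H}"

text \<open>A multicell of the multicomplex is recorded together with its index set J
  (its dimension is |J| - 1).\<close>
definition multicell :: "nat \<Rightarrow> nat \<Rightarrow> (nat \<times> nat) list set \<Rightarrow> nat set \<Rightarrow> (nat \<times> nat) list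
    \<Rightarrow> nat set \<times> (nat \<times> nat) list set set" where
  "multicell d k H J g = (J, cell_class d k H J g)"

definition multicell_le :: "nat \<Rightarrow> nat \<Rightarrow> (nat \<times> nat) list set
    \<Rightarrow> nat set \<times> (nat \<times> nat) list set set \<Rightarrow> nat set \<times> (nat \<times> nat) list set set \<Rightarrow> bool" where
  "multicell_le d k H \<sigma> \<tau> \<longleftrightarrow>
     (\<exists>I J g. I \<subseteq> J \<and> J \<subseteq> {0..d} \<and> g \<in> carrier (Gdk d k) \<and>
        \<sigma> = multicell d k H I g \<and> \<tau> = multicell d k H J g)"

definition top_cells :: "nat \<Rightarrow> nat \<Rightarrow> (nat \<times> nat) list set \<Rightarrow> (nat set \<times> (nat \<times> nat) list set set) set" where
  "top_cells d k H = {multicell d k H {0..d} g | g. g \<in> carrier (Gdk d k)}"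

definition facet_cells :: "nat \<Rightarrow> nat \<Rightarrow> (nat \<times> nat) list set \<Rightarrow> (nat set \<times> (nat \<times> nat) list set set) set" where
  "facet_cells d k H =
     {multicell d k H ({0..d} - {i}) g | i g. i \<le> d \<and> g \<in> carrier (Gdk d k)}"

end

theory Submission
  imports Defs
begin

lemma reduced_Nil[simp]: "reduced_word d k []"
  by (simp add: reduced_word_def)

lemma reduced_Cons: "reduced_word d k ((j,b)#w) \<longleftrightarrow>
   j \<le> d \<and> 0 < b \<and> b < k \<and> reduced_word d k w \<and> (w \<noteq> [] \<longrightarrow> fst (hd w) \<noteq> j)"
proof -
  have A: "(\<forall>n. Suc n < length ((j,b)#w) \<longrightarrow> fst (((j,b)#w) ! n) \<noteq> fst (((j,b)#w) ! Suc n))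
      \<longleftrightarrow> (w \<noteq> [] \<longrightarrow> fst (hd w) \<noteq> j) \<and> (\<forall>n. Suc n < length w \<longrightarrow> fst (w ! n) \<noteq> fst (w ! Suc n))"
  proof
    assume H: "\<forall>n. Suc n < length ((j,b)#w) \<longrightarrow> fst (((j,b)#w) ! n) \<noteq> fst (((j,b)#w) ! Suc n)"
    show "(w \<noteq> [] \<longrightarrow> fst (hd w) \<noteq> j) \<and> (\<forall>n. Suc n < length w \<longrightarrow> fst (w ! n) \<noteq> fst (w ! Suc n))"
    proof (intro conjI allI impI)
      assume "w \<noteq> []" then show "fst (hd w) \<noteq> j" using H[rule_format, of 0] by (cases w) auto
    next
      fix n assume "Suc n < length w" then show "fst (w ! n) \<noteq> fst (w ! Suc n)"
        using H[rule_format, of "Suc n"] by auto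
    qed
  next
    assume H: "(w \<noteq> [] \<longrightarrow> fst (hd w) \<noteq> j) \<and> (\<forall>n. Suc n < length w \<longrightarrow> fst (w ! n) \<noteq> fst (w ! Suc n))"
    show "\<forall>n. Suc n < length ((j,b)#w) \<longrightarrow> fst (((j,b)#w) ! n) \<noteq> fst (((j,b)#w) ! Suc n)"
    proof (intro allI impI)
      fix n assume "Suc n < length ((j,b)#w)"
      then show "fst (((j,b)#w) ! n) \<noteq> fst (((j,b)#w) ! Suc n)"
        using H by (cases n; cases w) auto
    qed
  qed
  show ?thesis unfolding reduced_word_def using A by auto
qed

lemma ins_mod: "ins_letter k i (a mod k) w = ins_letter k i a w"
  unfolding ins_letter_def by (auto split: list.splits simp: mod_add_left_eq)

lemma ins_zero: "a mod k = 0 \<Longrightarrow> ins_letter k i a w = w"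
  unfolding ins_letter_def by simp

lemma ins_reduced: "0 < k \<Longrightarrow> i \<le> d \<Longrightarrow> reduced_word d k w \<Longrightarrow> reduced_word d k (ins_letter k i a w)"
  unfolding ins_letter_def
  by (auto split: list.splits simp: reduced_Cons)

lemma ins_ins: "0 < k \<Longrightarrow> reduced_word d k w \<Longrightarrow>
   ins_letter k i a (ins_letter k i b w) = ins_letter k i (a+b) w"
proof (cases w)
  case Nil
  assume "0 < k"
  then show ?thesis using Nil unfolding ins_letter_def by (auto simp: mod_add_left_eq mod_add_right_eq)
next
  case (Cons x w')
  obtain j c where x: "x = (j,c)" by force
  assume k: "0 < k" and r: "reduced_word d k w"
  then have c: "0 < c" "c < k" "w' \<noteq> [] \<longrightarrow> fst (hd w') \<noteq> j" using Cons x by (auto simp: reduced_Cons)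
  show ?thesis
  proof (cases "j = i")
    case False then show ?thesis using Cons x k unfolding ins_letter_def
      by (auto simp: mod_add_left_eq mod_add_right_eq)
  next
    case True
    have hw: "ins_letter k i e w' = (if e mod k = 0 then w' else (i, e mod k) # w')" for e
      using c True unfolding ins_letter_def by (cases w') auto
    have hv: "0 < cc \<Longrightarrow> cc < k \<Longrightarrow> ins_letter k i e ((i,cc)#w') = (if (e + cc) mod k = 0 then w' else (i,(e + cc) mod k)#w')" for e cc
      unfolding ins_letter_def by auto
    have w: "w = (i,c)#w'" using Cons x True by simp
    show ?thesis
    proof (cases "(b + c) mod k = 0")
      case T: True
      have e: "(a + b + c) mod k = a mod k" using T
        by (metis add.assoc add.right_neutral mod_add_right_eq)
      show ?thesis unfolding w hv[OF c(1,2)] using T e hw by (simp add: add.assoc)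
    next
      case F: False
      have e: "(a + (b + c) mod k) mod k = (a + b + c) mod k" by (simp add: mod_add_right_eq add.assoc)
      show ?thesis unfolding w hv[OF c(1,2)] using F e hv[of "(b + c) mod k"] k by (simp add: add.assoc)
    qed
  qed
qed

lemma ins_Nil: "ins_letter k i a [] = (if a mod k = 0 then [] else [(i, a mod k)])"
  by (simp add: ins_letter_def)

lemma ins_Cons_ne: "i \<noteq> j \<Longrightarrow> ins_letter k i a ((j,b)#w) = (if a mod k = 0 then (j,b)#w else (i, a mod k)#(j,b)#w)"
  by (simp add: ins_letter_def)

lemma ins_Cons_eq: "0 < b \<Longrightarrow> b < k \<Longrightarrow> ins_letter k i a ((i,b)#w) = (if (a + b) mod k = 0 then w else (i,(a + b) mod k)#w)"
proof (cases "a mod k = 0")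
  case True
  assume "0 < b" "b < k"
  moreover have "(a + b) mod k = b mod k" using True by (metis add_0 mod_add_left_eq)
  ultimately show ?thesis using True by (simp add: ins_letter_def)
qed (simp add: ins_letter_def)

lemma wm_Nil[simp]: "word_mult k [] v = v"
  by (simp add: word_mult_def)

lemma wm_Cons[simp]: "word_mult k ((i,a)#u) v = ins_letter k i a (word_mult k u v)"
  by (simp add: word_mult_def)

lemma wm_reduced: "0 < k \<Longrightarrow> reduced_word d k u \<Longrightarrow> reduced_word d k v \<Longrightarrow> reduced_word d k (word_mult k u v)"
proof (induction u)
  case (Cons x u) then show ?case by (cases x) (auto simp: reduced_Cons intro!: ins_reduced)
qed simp

lemma wm_ins: assumes k: "0 < k" and x: "reduced_word d k x" and w: "reduced_word d k w"
  shows "word_mult k (ins_letter k i a x) w = ins_letter k i a (word_mult k x w)"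
proof (cases "a mod k = 0")
  case True then show ?thesis by (simp add: ins_zero)
next
  case False
  show ?thesis
  proof (cases x)
    case Nil then show ?thesis using False by (simp add: ins_Nil ins_mod[of k i a])
  next
    case (Cons y x')
    obtain j b where y: "y = (j,b)" by force
    have x': "reduced_word d k x'" using x Cons y by (simp add: reduced_Cons)
    have r: "reduced_word d k (word_mult k x' w)" using wm_reduced[OF k x' w] .
    show ?thesis
    proof (cases "i = j")
      case False2: False
      then show ?thesis using False Cons y by (simp add: ins_Cons_ne ins_mod[of k i a])
    next
      case True
      have ii: "ins_letter k i a (ins_letter k i b (word_mult k x' w)) = ins_letter k i (a+b) (word_mult k x' w)"
        using ins_ins[OF k r] .
      have bk: "0 < b" "b < k" using x Cons y by (auto simp: reduced_Cons)
      show ?thesis using Cons y True ii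
        by (auto simp: ins_Cons_eq[OF bk] ins_zero ins_mod)
    qed
  qed
qed

lemma wm_assoc: "0 < k \<Longrightarrow> reduced_word d k u \<Longrightarrow> reduced_word d k v \<Longrightarrow> reduced_word d k w \<Longrightarrow>
   word_mult k (word_mult k u v) w = word_mult k u (word_mult k v w)"
proof (induction u)
  case (Cons x u)
  obtain i a where x: "x = (i,a)" by force
  have u: "reduced_word d k u" using Cons.prems x by (simp add: reduced_Cons)
  show ?case using Cons.IH[OF Cons.prems(1) u Cons.prems(3,4)] x
    wm_ins[OF Cons.prems(1) wm_reduced[OF Cons.prems(1) u Cons.prems(3)] Cons.prems(4)] by simp
qed simp

lemma wm_Nil2: "reduced_word d k u \<Longrightarrow> word_mult k u [] = u"
proof (induction u)
  case (Cons x u)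
  obtain i a where x: "x = (i,a)" by force
  then show ?case using Cons by (cases u) (auto simp: reduced_Cons ins_Nil ins_Cons_ne)
qed simp

lemma Gdk_carrier[simp]: "carrier (Gdk d k) = {w. reduced_word d k w}"
  by (simp add: Gdk_def)
lemma Gdk_mult[simp]: "x \<otimes>\<^bsub>Gdk d k\<^esub> y = word_mult k x y"
  by (simp add: Gdk_def)
lemma Gdk_one[simp]: "\<one>\<^bsub>Gdk d k\<^esub> = []"
  by (simp add: Gdk_def)

lemma Gdk_group: assumes k: "0 < k" shows "group (Gdk d k)"
proof (rule groupI)
  show "x \<otimes>\<^bsub>Gdk d k\<^esub> y \<in> carrier (Gdk d k)" if "x \<in> carrier (Gdk d k)" "y \<in> carrier (Gdk d k)" for x y
    using that wm_reduced[OF k] by simp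
  show "\<one>\<^bsub>Gdk d k\<^esub> \<in> carrier (Gdk d k)" by simp
  show "x \<otimes>\<^bsub>Gdk d k\<^esub> y \<otimes>\<^bsub>Gdk d k\<^esub> z = x \<otimes>\<^bsub>Gdk d k\<^esub> (y \<otimes>\<^bsub>Gdk d k\<^esub> z)"
    if "x \<in> carrier (Gdk d k)" "y \<in> carrier (Gdk d k)" "z \<in> carrier (Gdk d k)" for x y z
    using that wm_assoc[OF k] by simp
  show "\<one>\<^bsub>Gdk d k\<^esub> \<otimes>\<^bsub>Gdk d k\<^esub> x = x" for x by simp
  show "\<exists>y\<in>carrier (Gdk d k). y \<otimes>\<^bsub>Gdk d k\<^esub> x = \<one>\<^bsub>Gdk d k\<^esub>" if "x \<in> carrier (Gdk d k)" for x
  proof -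
    have "reduced_word d k x \<Longrightarrow> \<exists>y. reduced_word d k y \<and> word_mult k y x = []"
    proof (induction x)
      case Nil then show ?case by (intro exI[of _ "[]"]) simp
    next
      case (Cons p u)
      obtain i a where p: "p = (i,a)" by force
      have u: "reduced_word d k u" and ia: "i \<le> d" "0 < a" "a < k" using Cons.prems p by (auto simp: reduced_Cons)
      obtain y where y: "reduced_word d k y" "word_mult k y u = []" using Cons.IH[OF u] by blast
      have z: "reduced_word d k [(i, k - a)]" using ia by (simp add: reduced_Cons)
      have pu: "p # u = word_mult k [(i,a)] u" using Cons.prems p
        by (cases u) (auto simp: reduced_Cons ins_Nil ins_Cons_ne)
      have za: "word_mult k [(i, k - a)] [(i,a)] = []" using ia by (simp add: ins_Nil ins_Cons_eq)
      have ia1: "reduced_word d k [(i,a)]" using ia by (simp add: reduced_Cons)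
      have "word_mult k (word_mult k y [(i, k - a)]) (p # u) = word_mult k y (word_mult k (word_mult k [(i, k - a)] [(i,a)]) u)"
      proof -
        have "word_mult k (word_mult k y [(i, k - a)]) (word_mult k [(i,a)] u)
             = word_mult k y (word_mult k [(i, k - a)] (word_mult k [(i,a)] u))"
          using wm_assoc[OF k y(1) z wm_reduced[OF k ia1 u]] .
        also have "\<dots> = word_mult k y (word_mult k (word_mult k [(i, k - a)] [(i,a)]) u)"
          using wm_assoc[OF k z ia1 u] by simp
        finally show ?thesis unfolding pu .
      qed
      also have "\<dots> = []" using za y by simp
      finally show ?case using wm_reduced[OF k y(1) z] by blast
    qed
    then show ?thesis using that by simp
  qed
qed

definition pw :: "nat \<Rightarrow> nat \<Rightarrow> nat \<Rightarrow> (nat \<times> nat) list" where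
  "pw k i n = ins_letter k i n []"

lemma pw_carrier: "0 < k \<Longrightarrow> i \<le> d \<Longrightarrow> pw k i n \<in> carrier (Gdk d k)"
  unfolding pw_def using ins_reduced[of k i d "[]"] by simp

lemma pw_eq_Nil: "pw k i n = [] \<longleftrightarrow> n mod k = 0"
  by (simp add: pw_def ins_Nil)

lemma pw_mod: "pw k i (n mod k) = pw k i n"
  by (simp add: pw_def ins_mod)

lemma pw_mult: assumes "0 < k" shows "word_mult k (pw k i m) (pw k i n) = pw k i (m + n)"
proof -
  have "word_mult k (pw k i m) w = ins_letter k i m w" for w
    by (cases "m mod k = 0") (auto simp: pw_def ins_Nil ins_zero ins_mod)
  then show ?thesis using ins_ins[OF assms reduced_Nil] by (simp add: pw_def)
qed

lemma alpha_pw: "alpha k i = pw k i 1"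
  by (simp add: alpha_def pw_def)

context
  fixes d k i :: nat
  assumes k: "0 < k" and i: "i \<le> d"
begin

interpretation G: group "Gdk d k" using Gdk_group[OF k] .

lemma alpha_pow: "alpha k i [^]\<^bsub>Gdk d k\<^esub> n = pw k i n"
proof (induction n)
  case 0 then show ?case by (simp add: pw_def ins_Nil)
next
  case (Suc n)
  have "alpha k i [^]\<^bsub>Gdk d k\<^esub> Suc n = alpha k i \<otimes>\<^bsub>Gdk d k\<^esub> alpha k i [^]\<^bsub>Gdk d k\<^esub> n"
    using G.nat_pow_Suc2 pw_carrier[OF k i] alpha_pw by metis
  then show ?case using Suc pw_mult[OF k, of i 1 n] alpha_pw by simp
qed

lemma K_eq: "generate (Gdk d k) {alpha k i} = pw k i ` {..<k}"
proof
  have sub: "subgroup (pw k i ` {..<k}) (Gdk d k)"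
  proof (rule G.subgroupI)
    show "pw k i ` {..<k} \<subseteq> carrier (Gdk d k)" using pw_carrier[OF k i] by blast
    show "pw k i ` {..<k} \<noteq> {}" using k by blast
    fix a assume "a \<in> pw k i ` {..<k}"
    then obtain n where n: "n < k" "a = pw k i n" by blast
    have "pw k i (k - n) \<otimes>\<^bsub>Gdk d k\<^esub> a = \<one>\<^bsub>Gdk d k\<^esub>"
      using pw_mult[OF k, of i "k - n" n] n pw_eq_Nil[of k i k] by simp
    then have "inv\<^bsub>Gdk d k\<^esub> a = pw k i (k - n)"
      using G.inv_equality pw_carrier[OF k i] n by metis
    moreover have "pw k i (k - n) = pw k i ((k - n) mod k)" by (simp add: pw_mod)
    ultimately show "inv\<^bsub>Gdk d k\<^esub> a \<in> pw k i ` {..<k}" using k by auto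
  next
    fix a b assume "a \<in> pw k i ` {..<k}" "b \<in> pw k i ` {..<k}"
    then obtain m n where "a = pw k i m" "b = pw k i n" by blast
    then have "a \<otimes>\<^bsub>Gdk d k\<^esub> b = pw k i ((m + n) mod k)" using pw_mult[OF k] pw_mod by simp
    then show "a \<otimes>\<^bsub>Gdk d k\<^esub> b \<in> pw k i ` {..<k}" using k by auto
  qed
  have "alpha k i \<in> pw k i ` {..<k}"
    using alpha_pw pw_mod[of k i 1] k by (metis image_eqI lessThan_iff mod_less_divisor)
  then show "generate (Gdk d k) {alpha k i} \<subseteq> pw k i ` {..<k}"
    using G.generate_subgroup_incl[OF _ sub] by blast
  show "pw k i ` {..<k} \<subseteq> generate (Gdk d k) {alpha k i}"
  proof
    fix x assume "x \<in> pw k i ` {..<k}"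
    then obtain n where "x = pw k i n" by blast
    then have x: "x = alpha k i [^]\<^bsub>Gdk d k\<^esub> n" using alpha_pow by simp
    have ac: "alpha k i \<in> carrier (Gdk d k)" using alpha_pw pw_carrier[OF k i] by metis
    have "alpha k i [^]\<^bsub>Gdk d k\<^esub> m \<in> generate (Gdk d k) {alpha k i}" for m :: nat
    proof (induction m)
      case 0 then show ?case using generate.one[of "Gdk d k"] by simp
    next
      case (Suc m)
      then show ?case using generate.eng[OF Suc generate.incl[of "alpha k i" "{alpha k i}" "Gdk d k"]] by simp
    qed
    then show "x \<in> generate (Gdk d k) {alpha k i}" unfolding x .
  qed
qed

lemma K_card: "card (generate (Gdk d k) {alpha k i}) = k"
proof -
  have "inj_on (pw k i) {..<k}"
  proof
    fix m n assume mn: "m \<in> {..<k}" "n \<in> {..<k}" "pw k i m = pw k i n"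
    then show "m = n" by (auto simp: pw_def ins_Nil split: if_splits)
  qed
  then show ?thesis unfolding K_eq by (simp add: card_image)
qed

lemma K_finite: "finite (generate (Gdk d k) {alpha k i})"
  unfolding K_eq by simp

end

lemma alpha_carrier: "0 < k \<Longrightarrow> i \<le> d \<Longrightarrow> alpha k i \<in> carrier (Gdk d k)"
  using alpha_pw pw_carrier by metis

lemma top_eq: assumes k: "0 < k" and x: "x \<in> carrier (Gdk d k)"
  shows "multicell d k H {0..d} x = ({0..d}, {{x \<otimes>\<^bsub>Gdk d k\<^esub> h} | h. h \<in> H})"
proof -
  interpret G: group "Gdk d k" using Gdk_group[OF k] .
  have "Ksub d k ({0..d} - {0..d}) = {[]}" unfolding Ksub_def using G.generate_empty by simp
  moreover have "({[]} #>\<^bsub>Gdk d k\<^esub> x) #>\<^bsub>Gdk d k\<^esub> h = {x \<otimes>\<^bsub>Gdk d k\<^esub> h}" for h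
    by (simp add: r_coset_def)
  ultimately show ?thesis unfolding multicell_def cell_class_def by simp
qed

declare Gdk_mult[simp del] Gdk_one[simp del]

lemma facet_count:
  assumes k: "0 < k" and i: "i \<le> d" and H: "subgroup H (Gdk d k)" and g: "g \<in> carrier (Gdk d k)"
  shows "card {\<tau> \<in> top_cells d k H. multicell_le d k H (multicell d k H ({0..d} - {i}) g) \<tau>} = k
     \<longleftrightarrow> generate (Gdk d k) {alpha k i} \<inter> ((g <#\<^bsub>Gdk d k\<^esub> H) #>\<^bsub>Gdk d k\<^esub> inv\<^bsub>Gdk d k\<^esub> g) = {\<one>\<^bsub>Gdk d k\<^esub>}"
proof -
  interpret G: group "Gdk d k" using Gdk_group[OF k] .
  define K where "K = generate (Gdk d k) {alpha k i}"
  define top where "top x = multicell d k H {0..d} x" for x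
  define I where "I = {0..d} - {i}"
  have KS: "subgroup K (Gdk d k)" unfolding K_def using G.generate_is_subgroup alpha_carrier[OF k i] by blast
  have Kc: "K \<subseteq> carrier (Gdk d k)" using KS subgroup.subset by blast
  have Hc: "H \<subseteq> carrier (Gdk d k)" using H subgroup.subset by blast
  have "{0..d} - I = {i}" unfolding I_def using i by auto
  then have KI: "Ksub d k ({0..d} - I) = K" unfolding Ksub_def K_def by simp
  have cc: "cell_class d k H I x = {(K #>\<^bsub>Gdk d k\<^esub> x) #>\<^bsub>Gdk d k\<^esub> h | h. h \<in> H}" for x
    unfolding cell_class_def KI ..
  have T3: "\<exists>h\<in>H. x = y \<otimes>\<^bsub>Gdk d k\<^esub> h" if "top x = top y" "x \<in> carrier (Gdk d k)" "y \<in> carrier (Gdk d k)" for x y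
  proof -
    have "{x \<otimes>\<^bsub>Gdk d k\<^esub> \<one>\<^bsub>Gdk d k\<^esub>} \<in> {{x \<otimes>\<^bsub>Gdk d k\<^esub> h} | h. h \<in> H}"
      using subgroup.one_closed[OF H] by blast
    then have "{x} \<in> {{y \<otimes>\<^bsub>Gdk d k\<^esub> h} | h. h \<in> H}"
    proof -
      have "{{x \<otimes>\<^bsub>Gdk d k\<^esub> h} | h. h \<in> H} = {{y \<otimes>\<^bsub>Gdk d k\<^esub> h} | h. h \<in> H}"
        using that(1) top_eq[OF k that(2)] top_eq[OF k that(3)] unfolding top_def by simp
      moreover have "x \<otimes>\<^bsub>Gdk d k\<^esub> \<one>\<^bsub>Gdk d k\<^esub> = x" using G.r_one[OF that(2)] .
      ultimately show ?thesis using \<open>{x \<otimes>\<^bsub>Gdk d k\<^esub> \<one>\<^bsub>Gdk d k\<^esub>} \<in> _\<close> by simp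
    qed
    then show ?thesis by blast
  qed
  have T4: "top (x \<otimes>\<^bsub>Gdk d k\<^esub> h) = top x" if "x \<in> carrier (Gdk d k)" "h \<in> H" for x h
  proof -
    have hc: "h \<in> carrier (Gdk d k)" using that Hc by blast
    have "{{x \<otimes>\<^bsub>Gdk d k\<^esub> h \<otimes>\<^bsub>Gdk d k\<^esub> h'} | h'. h' \<in> H} = {{x \<otimes>\<^bsub>Gdk d k\<^esub> h'} | h'. h' \<in> H}"
    proof (intro equalityI subsetI)
      fix A assume "A \<in> {{x \<otimes>\<^bsub>Gdk d k\<^esub> h \<otimes>\<^bsub>Gdk d k\<^esub> h'} | h'. h' \<in> H}"
      then obtain h' where h': "h' \<in> H" "A = {x \<otimes>\<^bsub>Gdk d k\<^esub> h \<otimes>\<^bsub>Gdk d k\<^esub> h'}" by blast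
      have h'c: "h' \<in> carrier (Gdk d k)" using h' Hc by blast
      have "x \<otimes>\<^bsub>Gdk d k\<^esub> h \<otimes>\<^bsub>Gdk d k\<^esub> h' = x \<otimes>\<^bsub>Gdk d k\<^esub> (h \<otimes>\<^bsub>Gdk d k\<^esub> h')"
        using G.m_assoc[OF that(1) hc h'c] .
      moreover have "h \<otimes>\<^bsub>Gdk d k\<^esub> h' \<in> H" using subgroup.m_closed[OF H that(2) h'(1)] .
      ultimately show "A \<in> {{x \<otimes>\<^bsub>Gdk d k\<^esub> h'} | h'. h' \<in> H}" using h'(2) by blast
    next
      fix A assume "A \<in> {{x \<otimes>\<^bsub>Gdk d k\<^esub> h'} | h'. h' \<in> H}"
      then obtain h' where h': "h' \<in> H" "A = {x \<otimes>\<^bsub>Gdk d k\<^esub> h'}" by blast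
      define h'' where "h'' = inv\<^bsub>Gdk d k\<^esub> h \<otimes>\<^bsub>Gdk d k\<^esub> h'"
      have h'': "h'' \<in> H" unfolding h''_def using subgroup.m_closed[OF H subgroup.m_inv_closed[OF H that(2)] h'(1)] .
      have h'c: "h' \<in> carrier (Gdk d k)" using h' Hc by blast
      have ihc: "inv\<^bsub>Gdk d k\<^esub> h \<in> carrier (Gdk d k)" using G.inv_closed[OF hc] .
      have "x \<otimes>\<^bsub>Gdk d k\<^esub> h \<otimes>\<^bsub>Gdk d k\<^esub> h'' = x \<otimes>\<^bsub>Gdk d k\<^esub> (h \<otimes>\<^bsub>Gdk d k\<^esub> h'')"
        using G.m_assoc[OF that(1) hc] h''_def ihc h'c G.m_closed by presburger
      also have "h \<otimes>\<^bsub>Gdk d k\<^esub> h'' = (h \<otimes>\<^bsub>Gdk d k\<^esub> inv\<^bsub>Gdk d k\<^esub> h) \<otimes>\<^bsub>Gdk d k\<^esub> h'"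
        unfolding h''_def using G.m_assoc[OF hc ihc h'c] by argo
      also have "\<dots> = h'" using G.r_inv[OF hc] G.l_one[OF h'c] by argo
      finally have eq: "x \<otimes>\<^bsub>Gdk d k\<^esub> h \<otimes>\<^bsub>Gdk d k\<^esub> h'' = x \<otimes>\<^bsub>Gdk d k\<^esub> h'" .
      have "A = {x \<otimes>\<^bsub>Gdk d k\<^esub> h \<otimes>\<^bsub>Gdk d k\<^esub> h''}" by (simp only: h'(2) eq)
      then show "A \<in> {{x \<otimes>\<^bsub>Gdk d k\<^esub> h \<otimes>\<^bsub>Gdk d k\<^esub> h'} | h'. h' \<in> H}" using h'' by blast
    qed
    then show ?thesis unfolding top_def using top_eq[OF k G.m_closed[OF that(1) hc]] top_eq[OF k that(1)] by simp
  qed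
  define S where "S = {\<tau> \<in> top_cells d k H. multicell_le d k H (multicell d k H I g) \<tau>}"
  have S_eq: "S = (\<lambda>\<kappa>. top (\<kappa> \<otimes>\<^bsub>Gdk d k\<^esub> g)) ` K"
  proof (intro equalityI subsetI)
    fix \<tau> assume "\<tau> \<in> S"
    then obtain g0 I' J g'' where g0: "\<tau> = multicell d k H {0..d} g0" "g0 \<in> carrier (Gdk d k)"
      and le: "I' \<subseteq> J" "J \<subseteq> {0..d}" "g'' \<in> carrier (Gdk d k)"
        "multicell d k H I g = multicell d k H I' g''" "\<tau> = multicell d k H J g''"
      unfolding S_def top_cells_def multicell_le_def by blast
    have J: "J = {0..d}" using arg_cong[OF trans[OF le(5)[symmetric] g0(1)], of fst] by (simp add: multicell_def)
    have I': "I' = I" using arg_cong[OF le(4), of fst] by (simp add: multicell_def)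
    have "cell_class d k H I g'' = cell_class d k H I g" using arg_cong[OF le(4), of snd] I' by (simp add: multicell_def)
    moreover have "K #>\<^bsub>Gdk d k\<^esub> g'' \<in> cell_class d k H I g''"
    proof -
      have e: "(K #>\<^bsub>Gdk d k\<^esub> g'') #>\<^bsub>Gdk d k\<^esub> \<one>\<^bsub>Gdk d k\<^esub> = K #>\<^bsub>Gdk d k\<^esub> g''"
        using G.coset_mult_one[OF G.r_coset_subset_G[OF Kc le(3)]] .
      show ?thesis unfolding cc using e subgroup.one_closed[OF H] by blast
    qed
    ultimately have m: "K #>\<^bsub>Gdk d k\<^esub> g'' \<in> cell_class d k H I g" by (simp only:)
    then obtain h where h: "h \<in> H" "K #>\<^bsub>Gdk d k\<^esub> g'' = (K #>\<^bsub>Gdk d k\<^esub> g) #>\<^bsub>Gdk d k\<^esub> h"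
      unfolding cc mem_Collect_eq by blast
    have hc: "h \<in> carrier (Gdk d k)" using h Hc by blast
    have "g'' \<in> K #>\<^bsub>Gdk d k\<^esub> (g \<otimes>\<^bsub>Gdk d k\<^esub> h)"
      using G.rcos_self[OF le(3) KS] unfolding h(2) G.coset_mult_assoc[OF Kc g hc] .
    then obtain \<kappa> where \<kappa>: "\<kappa> \<in> K" "g'' = \<kappa> \<otimes>\<^bsub>Gdk d k\<^esub> (g \<otimes>\<^bsub>Gdk d k\<^esub> h)"
      unfolding r_coset_def by blast
    have \<kappa>c: "\<kappa> \<in> carrier (Gdk d k)" using \<kappa> Kc by blast
    have "\<tau> = top g''" unfolding top_def using le J by simp
    also have "\<dots> = top (\<kappa> \<otimes>\<^bsub>Gdk d k\<^esub> g \<otimes>\<^bsub>Gdk d k\<^esub> h)"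
      unfolding \<kappa>(2) by (simp only: G.m_assoc[OF \<kappa>c g hc])
    also have "\<dots> = top (\<kappa> \<otimes>\<^bsub>Gdk d k\<^esub> g)" using T4[OF G.m_closed[OF \<kappa>c g] h(1)] .
    finally show "\<tau> \<in> (\<lambda>\<kappa>. top (\<kappa> \<otimes>\<^bsub>Gdk d k\<^esub> g)) ` K" using \<kappa> by blast
  next
    fix \<tau> assume "\<tau> \<in> (\<lambda>\<kappa>. top (\<kappa> \<otimes>\<^bsub>Gdk d k\<^esub> g)) ` K"
    then obtain \<kappa> where \<kappa>: "\<kappa> \<in> K" "\<tau> = top (\<kappa> \<otimes>\<^bsub>Gdk d k\<^esub> g)" by blast
    have \<kappa>c: "\<kappa> \<in> carrier (Gdk d k)" using \<kappa> Kc by blast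
    have kg: "\<kappa> \<otimes>\<^bsub>Gdk d k\<^esub> g \<in> carrier (Gdk d k)" using \<kappa>c g G.m_closed by blast
    have "K #>\<^bsub>Gdk d k\<^esub> (\<kappa> \<otimes>\<^bsub>Gdk d k\<^esub> g) = K #>\<^bsub>Gdk d k\<^esub> g"
      unfolding G.coset_mult_assoc[OF Kc \<kappa>c g, symmetric] subgroup.rcos_const[OF KS G.is_group \<kappa>(1)] ..
    then have "cell_class d k H I (\<kappa> \<otimes>\<^bsub>Gdk d k\<^esub> g) = cell_class d k H I g" unfolding cc by simp
    then have mc: "multicell d k H I g = multicell d k H I (\<kappa> \<otimes>\<^bsub>Gdk d k\<^esub> g)"
      unfolding multicell_def by (simp only:)
    have Isub: "I \<subseteq> {0..d}" unfolding I_def by blast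
    have "multicell_le d k H (multicell d k H I g) \<tau>"
      unfolding multicell_le_def using \<kappa>(2) kg mc Isub unfolding top_def by blast
    moreover have "\<tau> \<in> top_cells d k H" using \<kappa>(2) kg unfolding top_def top_cells_def by blast
    ultimately show "\<tau> \<in> S" unfolding S_def by blast
  qed
  have finK: "finite K" and cardK: "card K = k" unfolding K_def using K_finite[OF k i] K_card[OF k i] by auto
  have "card S = k \<longleftrightarrow> inj_on (\<lambda>\<kappa>. top (\<kappa> \<otimes>\<^bsub>Gdk d k\<^esub> g)) K"
    unfolding S_eq using inj_on_iff_eq_card[OF finK, of "\<lambda>\<kappa>. top (\<kappa> \<otimes>\<^bsub>Gdk d k\<^esub> g)"] cardK by simp
  also have "\<dots> \<longleftrightarrow> K \<inter> ((g <#\<^bsub>Gdk d k\<^esub> H) #>\<^bsub>Gdk d k\<^esub> inv\<^bsub>Gdk d k\<^esub> g) = {\<one>\<^bsub>Gdk d k\<^esub>}"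
  proof
    have conj: "(g <#\<^bsub>Gdk d k\<^esub> H) #>\<^bsub>Gdk d k\<^esub> inv\<^bsub>Gdk d k\<^esub> g
        = {g \<otimes>\<^bsub>Gdk d k\<^esub> h \<otimes>\<^bsub>Gdk d k\<^esub> inv\<^bsub>Gdk d k\<^esub> g | h. h \<in> H}"
      unfolding l_coset_def r_coset_def by blast
    show "K \<inter> ((g <#\<^bsub>Gdk d k\<^esub> H) #>\<^bsub>Gdk d k\<^esub> inv\<^bsub>Gdk d k\<^esub> g) = {\<one>\<^bsub>Gdk d k\<^esub>}"
      if inj: "inj_on (\<lambda>\<kappa>. top (\<kappa> \<otimes>\<^bsub>Gdk d k\<^esub> g)) K"
    proof (intro equalityI subsetI)
      fix x assume "x \<in> K \<inter> ((g <#\<^bsub>Gdk d k\<^esub> H) #>\<^bsub>Gdk d k\<^esub> inv\<^bsub>Gdk d k\<^esub> g)"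
      then obtain h where x: "x \<in> K" "h \<in> H" "x = g \<otimes>\<^bsub>Gdk d k\<^esub> h \<otimes>\<^bsub>Gdk d k\<^esub> inv\<^bsub>Gdk d k\<^esub> g"
        unfolding conj by blast
      have hc: "h \<in> carrier (Gdk d k)" using x Hc by blast
      have "x \<otimes>\<^bsub>Gdk d k\<^esub> g = g \<otimes>\<^bsub>Gdk d k\<^esub> h" unfolding x(3)
        using g hc by (metis G.inv_closed G.l_inv G.m_assoc G.m_closed G.r_one)
      then have "top (x \<otimes>\<^bsub>Gdk d k\<^esub> g) = top (\<one>\<^bsub>Gdk d k\<^esub> \<otimes>\<^bsub>Gdk d k\<^esub> g)"
        using T4[OF g x(2)] G.l_one[OF g] by simp
      moreover have "\<one>\<^bsub>Gdk d k\<^esub> \<in> K" using subgroup.one_closed[OF KS] .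
      ultimately show "x \<in> {\<one>\<^bsub>Gdk d k\<^esub>}" using inj x(1) unfolding inj_on_def by blast
    next
      fix x assume "x \<in> {\<one>\<^bsub>Gdk d k\<^esub>}"
      moreover have "\<one>\<^bsub>Gdk d k\<^esub> = g \<otimes>\<^bsub>Gdk d k\<^esub> \<one>\<^bsub>Gdk d k\<^esub> \<otimes>\<^bsub>Gdk d k\<^esub> inv\<^bsub>Gdk d k\<^esub> g"
        using g by (metis G.r_inv G.r_one)
      ultimately show "x \<in> K \<inter> ((g <#\<^bsub>Gdk d k\<^esub> H) #>\<^bsub>Gdk d k\<^esub> inv\<^bsub>Gdk d k\<^esub> g)"
        unfolding conj using subgroup.one_closed[OF KS] subgroup.one_closed[OF H] by blast
    qed
    show "inj_on (\<lambda>\<kappa>. top (\<kappa> \<otimes>\<^bsub>Gdk d k\<^esub> g)) K"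
      if triv: "K \<inter> ((g <#\<^bsub>Gdk d k\<^esub> H) #>\<^bsub>Gdk d k\<^esub> inv\<^bsub>Gdk d k\<^esub> g) = {\<one>\<^bsub>Gdk d k\<^esub>}"
    proof
      fix a b assume ab: "a \<in> K" "b \<in> K" "top (a \<otimes>\<^bsub>Gdk d k\<^esub> g) = top (b \<otimes>\<^bsub>Gdk d k\<^esub> g)"
      have ac: "a \<in> carrier (Gdk d k)" and bc: "b \<in> carrier (Gdk d k)" using ab Kc by blast+
      obtain h where h: "h \<in> H" "a \<otimes>\<^bsub>Gdk d k\<^esub> g = b \<otimes>\<^bsub>Gdk d k\<^esub> g \<otimes>\<^bsub>Gdk d k\<^esub> h"
        using T3[OF ab(3)] ac bc g G.m_closed by blast
      have hc: "h \<in> carrier (Gdk d k)" using h Hc by blast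
      define x where "x = inv\<^bsub>Gdk d k\<^esub> b \<otimes>\<^bsub>Gdk d k\<^esub> a"
      have xK: "x \<in> K" unfolding x_def using ab KS subgroup.m_closed subgroup.m_inv_closed by metis
      have "x = g \<otimes>\<^bsub>Gdk d k\<^esub> h \<otimes>\<^bsub>Gdk d k\<^esub> inv\<^bsub>Gdk d k\<^esub> g"
      proof -
        have "inv\<^bsub>Gdk d k\<^esub> b \<otimes>\<^bsub>Gdk d k\<^esub> (a \<otimes>\<^bsub>Gdk d k\<^esub> g) = g \<otimes>\<^bsub>Gdk d k\<^esub> h"
          using h(2) ac bc g hc by (metis G.inv_closed G.l_inv G.l_one G.m_assoc G.m_closed)
        then have "x \<otimes>\<^bsub>Gdk d k\<^esub> g = g \<otimes>\<^bsub>Gdk d k\<^esub> h"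
          unfolding x_def using ac bc g by (metis G.inv_closed G.m_assoc)
        then show ?thesis using ac bc g hc unfolding x_def
          by (metis G.inv_closed G.m_assoc G.m_closed G.r_inv G.r_one)
      qed
      then have "x \<in> K \<inter> ((g <#\<^bsub>Gdk d k\<^esub> H) #>\<^bsub>Gdk d k\<^esub> inv\<^bsub>Gdk d k\<^esub> g)"
        unfolding conj using xK h(1) by blast
      then have "x = \<one>\<^bsub>Gdk d k\<^esub>" using triv by blast
      then show "a = b" unfolding x_def using ac bc
        by (metis G.inv_closed G.inv_inv G.inv_equality G.l_inv)
    qed
  qed
  finally show ?thesis unfolding S_def K_def I_def .
qed


lemma ord_lemma:
  assumes k: "0 < k" and i: "i \<le> d" and N: "H \<lhd> Gdk d k"
  shows "generate (Gdk d k) {alpha k i} \<inter> H = {\<one>\<^bsub>Gdk d k\<^esub>}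
     \<longleftrightarrow> group.ord (Gdk d k Mod H) (H #>\<^bsub>Gdk d k\<^esub> alpha k i) = k"
proof -
  interpret G: group "Gdk d k" using Gdk_group[OF k] .
  interpret N: normal H "Gdk d k" using N .
  have Q: "group (Gdk d k Mod H)" using N.factorgroup_is_group .
  have Qm: "monoid (Gdk d k Mod H)" using Q group.is_monoid by blast
  have Hc: "H \<subseteq> carrier (Gdk d k)" using N.subset by blast
  have ac: "alpha k i \<in> carrier (Gdk d k)" using alpha_carrier[OF k i] .
  have aQ: "H #>\<^bsub>Gdk d k\<^esub> alpha k i \<in> carrier (Gdk d k Mod H)"
    unfolding carrier_FactGroup using ac by blast
  have one: "\<one>\<^bsub>Gdk d k\<^esub> = pw k i 0" by (simp add: pw_def ins_Nil Gdk_one)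
  have pwc: "pw k i n \<in> carrier (Gdk d k)" for n using pw_carrier[OF k i] .
  have powQ: "(H #>\<^bsub>Gdk d k\<^esub> alpha k i) [^]\<^bsub>Gdk d k Mod H\<^esub> n = H #>\<^bsub>Gdk d k\<^esub> pw k i n" for n :: nat
  proof (induction n)
    case 0
    have "H #>\<^bsub>Gdk d k\<^esub> pw k i 0 = H" using G.coset_mult_one[OF Hc] one by simp
    then show ?case by simp
  next
    case (Suc n)
    have "(H #>\<^bsub>Gdk d k\<^esub> alpha k i) [^]\<^bsub>Gdk d k Mod H\<^esub> Suc n
        = (H #>\<^bsub>Gdk d k\<^esub> pw k i n) <#>\<^bsub>Gdk d k\<^esub> (H #>\<^bsub>Gdk d k\<^esub> alpha k i)"
      using monoid.nat_pow_Suc[OF Qm] Suc by simp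
    also have "\<dots> = H #>\<^bsub>Gdk d k\<^esub> (pw k i n \<otimes>\<^bsub>Gdk d k\<^esub> alpha k i)"
      using N.rcos_sum[OF pwc ac] .
    also have "pw k i n \<otimes>\<^bsub>Gdk d k\<^esub> alpha k i = pw k i (Suc n)"
      using pw_mult[OF k, of i n 1] alpha_pw by (simp add: Gdk_mult)
    finally show ?case .
  qed
  have memH: "H #>\<^bsub>Gdk d k\<^esub> x = H \<longleftrightarrow> x \<in> H" if "x \<in> carrier (Gdk d k)" for x
    using N.rcos_const[OF G.is_group] G.rcos_self[OF that N.subgroup_axioms] by blast
  have key: "group.ord (Gdk d k Mod H) (H #>\<^bsub>Gdk d k\<^esub> alpha k i) dvd n \<longleftrightarrow> pw k i n \<in> H" for n
    using group.pow_eq_id[OF Q aQ, of n] powQ[of n] memH[OF pwc] by simp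
  have KH: "generate (Gdk d k) {alpha k i} \<inter> H = {\<one>\<^bsub>Gdk d k\<^esub>} \<longleftrightarrow> (\<forall>n<k. pw k i n \<in> H \<longrightarrow> n = 0)"
  proof
    assume A: "generate (Gdk d k) {alpha k i} \<inter> H = {\<one>\<^bsub>Gdk d k\<^esub>}"
    show "\<forall>n<k. pw k i n \<in> H \<longrightarrow> n = 0"
    proof (intro allI impI)
      fix n assume n: "n < k" "pw k i n \<in> H"
      then have "pw k i n \<in> generate (Gdk d k) {alpha k i} \<inter> H" unfolding K_eq[OF k i] by blast
      then have "pw k i n = pw k i 0" using A one by simp
      then show "n = 0" using pw_eq_Nil[of k i n] n by (simp add: pw_def ins_Nil)
    qed
  next
    assume A: "\<forall>n<k. pw k i n \<in> H \<longrightarrow> n = 0"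
    show "generate (Gdk d k) {alpha k i} \<inter> H = {\<one>\<^bsub>Gdk d k\<^esub>}"
    proof (intro equalityI subsetI)
      fix x assume "x \<in> generate (Gdk d k) {alpha k i} \<inter> H"
      then obtain n where "n < k" "x = pw k i n" "pw k i n \<in> H" unfolding K_eq[OF k i] by blast
      then show "x \<in> {\<one>\<^bsub>Gdk d k\<^esub>}" using A one by auto
    next
      fix x assume "x \<in> {\<one>\<^bsub>Gdk d k\<^esub>}"
      then show "x \<in> generate (Gdk d k) {alpha k i} \<inter> H"
        using one N.one_closed k unfolding K_eq[OF k i] by auto
    qed
  qed
  define od where "od = group.ord (Gdk d k Mod H) (H #>\<^bsub>Gdk d k\<^esub> alpha k i)"
  show ?thesis unfolding KH od_def[symmetric]
  proof
    assume A: "\<forall>n<k. pw k i n \<in> H \<longrightarrow> n = 0"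
    have "pw k i k = pw k i 0" using pw_mod[of k i k] by simp
    then have "od dvd k" using key[of k] one N.one_closed unfolding od_def by simp
    moreover have "pw k i (od mod k) \<in> H" using key[of od] pw_mod[of k i od] unfolding od_def by simp
    then have "od mod k = 0" using A k by simp
    ultimately show "od = k" unfolding od_def by (simp add: dvd_antisym mod_eq_0_iff_dvd)
  next
    assume "od = k"
    then show "\<forall>n<k. pw k i n \<in> H \<longrightarrow> n = 0" using key unfolding od_def
      by (metis dvd_imp_le gr0I linorder_not_le)
  qed
qed

lemma conj_normal:
  assumes k: "0 < k" and N: "H \<lhd> Gdk d k" and g: "g \<in> carrier (Gdk d k)"
  shows "(g <#\<^bsub>Gdk d k\<^esub> H) #>\<^bsub>Gdk d k\<^esub> inv\<^bsub>Gdk d k\<^esub> g = H"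
proof -
  interpret G: group "Gdk d k" using Gdk_group[OF k] .
  interpret N: normal H "Gdk d k" using N .
  have Hc: "H \<subseteq> carrier (Gdk d k)" using N.subset by blast
  have "(g <#\<^bsub>Gdk d k\<^esub> H) #>\<^bsub>Gdk d k\<^esub> inv\<^bsub>Gdk d k\<^esub> g = (H #>\<^bsub>Gdk d k\<^esub> g) #>\<^bsub>Gdk d k\<^esub> inv\<^bsub>Gdk d k\<^esub> g"
    using N.coset_eq g by simp
  also have "\<dots> = H #>\<^bsub>Gdk d k\<^esub> (g \<otimes>\<^bsub>Gdk d k\<^esub> inv\<^bsub>Gdk d k\<^esub> g)"
    using G.coset_mult_assoc[OF Hc g G.inv_closed[OF g]] .
  also have "\<dots> = H" using G.r_inv[OF g] G.coset_mult_one[OF Hc] by simp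
  finally show ?thesis .
qed

theorem lemma9:
  fixes d k :: nat and H :: "(nat \<times> nat) list set"
  assumes "d \<ge> 1" and "k \<ge> 1"
    and "subgroup H (Gdk d k)"
  shows "((\<forall>\<sigma> \<in> facet_cells d k H. card {\<tau> \<in> top_cells d k H. multicell_le d k H \<sigma> \<tau>} = k)
          \<longleftrightarrow> (\<forall>i \<le> d. \<forall>g \<in> carrier (Gdk d k).
                 generate (Gdk d k) {alpha k i} \<inter>
                   ((g <#\<^bsub>Gdk d k\<^esub> H) #>\<^bsub>Gdk d k\<^esub> inv\<^bsub>Gdk d k\<^esub> g) = {\<one>\<^bsub>Gdk d k\<^esub>}))
       \<and> (H \<lhd> Gdk d k \<longrightarrow>
          ((\<forall>\<sigma> \<in> facet_cells d k H. card {\<tau> \<in> top_cells d k H. multicell_le d k H \<sigma> \<tau>} = k)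
           \<longleftrightarrow> (\<forall>i \<le> d. group.ord (Gdk d k Mod H) (H #>\<^bsub>Gdk d k\<^esub> alpha k i) = k)))"
proof -
  have k: "0 < k" using assms(2) by simp
  have A: "(\<forall>\<sigma> \<in> facet_cells d k H. card {\<tau> \<in> top_cells d k H. multicell_le d k H \<sigma> \<tau>} = k)
          \<longleftrightarrow> (\<forall>i \<le> d. \<forall>g \<in> carrier (Gdk d k).
                 generate (Gdk d k) {alpha k i} \<inter>
                   ((g <#\<^bsub>Gdk d k\<^esub> H) #>\<^bsub>Gdk d k\<^esub> inv\<^bsub>Gdk d k\<^esub> g) = {\<one>\<^bsub>Gdk d k\<^esub>})"
    (is "?L \<longleftrightarrow> ?R")
  proof
    assume L: ?L
    show ?R
    proof (intro allI impI ballI)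
      fix i g assume i: "i \<le> d" and g: "g \<in> carrier (Gdk d k)"
      have "multicell d k H ({0..d} - {i}) g \<in> facet_cells d k H" unfolding facet_cells_def using i g by blast
      then show "generate (Gdk d k) {alpha k i} \<inter> ((g <#\<^bsub>Gdk d k\<^esub> H) #>\<^bsub>Gdk d k\<^esub> inv\<^bsub>Gdk d k\<^esub> g) = {\<one>\<^bsub>Gdk d k\<^esub>}"
        using L facet_count[OF k i assms(3) g] by blast
    qed
  next
    assume R: ?R
    show ?L
    proof
      fix \<sigma> assume "\<sigma> \<in> facet_cells d k H"
      then obtain i g where i: "i \<le> d" and g: "g \<in> carrier (Gdk d k)" and s: "\<sigma> = multicell d k H ({0..d} - {i}) g"
        unfolding facet_cells_def by blast
      show "card {\<tau> \<in> top_cells d k H. multicell_le d k H \<sigma> \<tau>} = k"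
        unfolding s using facet_count[OF k i assms(3) g] R i g by blast
    qed
  qed
  have B: "(\<forall>i \<le> d. \<forall>g \<in> carrier (Gdk d k).
                 generate (Gdk d k) {alpha k i} \<inter>
                   ((g <#\<^bsub>Gdk d k\<^esub> H) #>\<^bsub>Gdk d k\<^esub> inv\<^bsub>Gdk d k\<^esub> g) = {\<one>\<^bsub>Gdk d k\<^esub>})
        \<longleftrightarrow> (\<forall>i \<le> d. group.ord (Gdk d k Mod H) (H #>\<^bsub>Gdk d k\<^esub> alpha k i) = k)"
    if N: "H \<lhd> Gdk d k"
  proof -
    have "(\<forall>i \<le> d. \<forall>g \<in> carrier (Gdk d k).
                 generate (Gdk d k) {alpha k i} \<inter>
                   ((g <#\<^bsub>Gdk d k\<^esub> H) #>\<^bsub>Gdk d k\<^esub> inv\<^bsub>Gdk d k\<^esub> g) = {\<one>\<^bsub>Gdk d k\<^esub>})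
        \<longleftrightarrow> (\<forall>i \<le> d. generate (Gdk d k) {alpha k i} \<inter> H = {\<one>\<^bsub>Gdk d k\<^esub>})"
    proof -
      have "[] \<in> carrier (Gdk d k)" by simp
      then show ?thesis using conj_normal[OF k N] by fastforce
    qed
    also have "\<dots> \<longleftrightarrow> (\<forall>i \<le> d. group.ord (Gdk d k Mod H) (H #>\<^bsub>Gdk d k\<^esub> alpha k i) = k)"
      using ord_lemma[OF k _ N] by blast
    finally show ?thesis .
  qed
  show ?thesis using A B by blast
qed

end
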